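(* Let $r\ge 1$ and $n\ge 3r+6$ be integers. Then $\rho(H_{n,r})\ge \rho(H'_{n,r})$, with equality if and only if $n=3r+6$.
   Context: $\rho$ denotes the spectral radius (largest adjacency eigenvalue). $K_1\vee rK_3$ is the join of a single vertex with $r$ disjoint triangles; let $u$ be its vertex of degree $3r$ (any vertex if $r=1$). In $K_{3,n-3r-3}$ (complete bipartite with parts of sizes $3$ and $n-3r-3$), let $vw$ be an edge where $v$ has degree $n-3r-3$ and $w$ has degree $3$. $H_{n,r}$ is the graph obtained from the disjoint union of $K_1\vee rK_3$ and $K_{3,n-3r-3}$ by identifying $u$ with $v$, and $H'_{n,r}$ is obtained by identifying $u$ with $w$. *)

theory Defs
  imports "Jordan_Normal_Form.Spectral_Radius"
begin

(* Simple graphs on vertex set {0..<n}, given by a symmetric irreflexive edge predicate. *)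

definition adj_matrix :: "nat \<Rightarrow> (nat \<Rightarrow> nat \<Rightarrow> bool) \<Rightarrow> complex mat" where
  "adj_matrix n E = mat n n (\<lambda>(i,j). if E i j then 1 else 0)"

definition graph_rho :: "nat \<Rightarrow> (nat \<Rightarrow> nat \<Rightarrow> bool) \<Rightarrow> real" where
  "graph_rho n E = spectral_radius (adj_matrix n E)"

(* K_1 v rK_3 on vertices {0..3r}: vertex 0 is u, triangles {3k+1,3k+2,3k+3}, k<r *)
definition fan_edge :: "nat \<Rightarrow> nat \<Rightarrow> nat \<Rightarrow> bool" where
  "fan_edge r i j \<longleftrightarrow> i \<noteq> j \<and>
     ((i = 0 \<and> 1 \<le> j \<and> j \<le> 3*r) \<or> (j = 0 \<and> 1 \<le> i \<and> i \<le> 3*r) \<or>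
      (1 \<le> i \<and> i \<le> 3*r \<and> 1 \<le> j \<and> j \<le> 3*r \<and> (i - 1) div 3 = (j - 1) div 3))"

definition bip_edge :: "nat set \<Rightarrow> nat set \<Rightarrow> nat \<Rightarrow> nat \<Rightarrow> bool" where
  "bip_edge A B i j \<longleftrightarrow> (i \<in> A \<and> j \<in> B) \<or> (i \<in> B \<and> j \<in> A)"

(* H_{n,r}: u identified with v, a vertex of the 3-part (degree n-3r-3).
   3-part = {0, 3r+1, 3r+2}, other part = {3r+3..<n} (size n-3r-3). *)
definition H_edge :: "nat \<Rightarrow> nat \<Rightarrow> nat \<Rightarrow> nat \<Rightarrow> bool" where
  "H_edge n r i j \<longleftrightarrow> fan_edge r i j \<or> bip_edge {0, 3*r+1, 3*r+2} {3*r+3..<n} i j"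

(* H'_{n,r}: u identified with w, a vertex of the (n-3r-3)-part (degree 3).
   3-part = {3r+1, 3r+2, 3r+3}, other part = {0} \<union> {3r+4..<n} (size n-3r-3). *)
definition H'_edge :: "nat \<Rightarrow> nat \<Rightarrow> nat \<Rightarrow> nat \<Rightarrow> bool" where
  "H'_edge n r i j \<longleftrightarrow> fan_edge r i j \<or> bip_edge {3*r+1, 3*r+2, 3*r+3} ({0} \<union> {3*r+4..<n}) i j"

end

theory Submission
  imports Defs
begin


lemma adj_carrier: "adj_matrix n E \<in> carrier_mat n n" by (simp add: adj_matrix_def)

lemma adj_mult: assumes "i < n" "v \<in> carrier_vec n"
  shows "(adj_matrix n E *\<^sub>v v) $ i = (\<Sum>j\<in>{0..<n}. if E i j then v $ j else 0)"
  using assms by (auto simp: adj_matrix_def mult_mat_vec_def scalar_prod_def intro!: sum.cong)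

lemma cw_core:
  fixes v :: "nat \<Rightarrow> complex" and w :: "nat \<Rightarrow> real"
  assumes ex: "\<exists>i<n. v i \<noteq> 0"
  and eig: "\<forall>i<n. l * v i = (\<Sum>j\<in>{0..<n}. if E i j then v j else 0)"
  and wpos: "\<forall>i<n. w i > 0"
  and sub: "\<forall>i<n. (\<Sum>j\<in>{0..<n}. if E i j then w j else 0) \<le> \<mu> * w i"
  shows "norm l \<le> \<mu>"
    and "i0 < n \<Longrightarrow> (\<Sum>j\<in>{0..<n}. if E i0 j then w j else 0) < \<mu> * w i0 \<Longrightarrow>
         (\<forall>S. S \<subseteq> {0..<n} \<and> S \<noteq> {} \<and> (\<forall>i\<in>S. \<forall>j<n. E i j \<longrightarrow> j \<in> S) \<longrightarrow> i0 \<in> S) \<Longrightarrow>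
         norm l < \<mu>"
proof -
  define q where "q i = norm (v i) / w i" for i
  obtain i' where i': "i' < n" "v i' \<noteq> 0" using ex by auto
  have fin: "finite (q ` {0..<n})" and ne: "q ` {0..<n} \<noteq> {}" using i' by auto
  define t where "t = Max (q ` {0..<n})"
  have qle: "q j \<le> t" if "j < n" for j unfolding t_def using fin that by auto
  have vle: "norm (v j) \<le> t * w j" if "j < n" for j
    using qle[OF that] wpos that by (auto simp: q_def divide_le_eq mult.commute)
  have tpos: "t > 0"
  proof -
    have "q i' > 0" using i' wpos by (auto simp: q_def)
    thus ?thesis using qle[OF i'(1)] by linarith
  qed
  define R where "R i = (\<Sum>j\<in>{0..<n}. if E i j then w j else 0)" for i
  have chain1: "norm l * norm (v i) \<le> (\<Sum>j\<in>{0..<n}. if E i j then norm (v j) else 0)" if "i < n" for i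
  proof -
    have "norm l * norm (v i) = norm (\<Sum>j\<in>{0..<n}. if E i j then v j else 0)"
      using eig that by (metis norm_mult)
    also have "\<dots> \<le> (\<Sum>j\<in>{0..<n}. norm (if E i j then v j else 0))" by (rule norm_sum)
    also have "\<dots> = (\<Sum>j\<in>{0..<n}. if E i j then norm (v j) else 0)" by (rule sum.cong) auto
    finally show ?thesis .
  qed
  have chain2: "(\<Sum>j\<in>{0..<n}. if E i j then norm (v j) else 0) \<le> (\<Sum>j\<in>{0..<n}. if E i j then t * w j else 0)" for i
    by (rule sum_mono) (auto simp: vle)
  have chain3: "(\<Sum>j\<in>{0..<n}. if E i j then t * w j else 0) = t * R i" for i
    unfolding R_def sum_distrib_left by (rule sum.cong) auto
  have chain4: "t * R i \<le> t * (\<mu> * w i)" if "i < n" for i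
    using sub that tpos unfolding R_def by (auto intro: mult_left_mono)
  obtain i1 where i1: "i1 < n" "q i1 = t" unfolding t_def using Max_in[OF fin ne] by auto
  have vi1: "norm (v i1) = t * w i1" using i1 wpos by (auto simp: q_def field_simps)
  have vi1pos: "norm (v i1) > 0" using vi1 tpos wpos i1 by auto
  have "norm l * norm (v i1) \<le> \<mu> * norm (v i1)"
    using chain1[OF i1(1)] chain2[of i1] chain3[of i1] chain4[OF i1(1)] vi1 by (simp add: algebra_simps)
  thus "norm l \<le> \<mu>" using vi1pos by simp
  assume i0: "i0 < n" and strict: "(\<Sum>j\<in>{0..<n}. if E i0 j then w j else 0) < \<mu> * w i0"
    and conn: "\<forall>S. S \<subseteq> {0..<n} \<and> S \<noteq> {} \<and> (\<forall>i\<in>S. \<forall>j<n. E i j \<longrightarrow> j \<in> S) \<longrightarrow> i0 \<in> S"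
  show "norm l < \<mu>"
  proof (rule ccontr)
    assume "\<not> norm l < \<mu>"
    hence lge: "\<mu> \<le> norm l" by simp
    define S where "S = {i. i < n \<and> norm (v i) = t * w i}"
    have closed: "\<forall>i\<in>S. \<forall>j<n. E i j \<longrightarrow> j \<in> S" and notin: "i0 \<notin> S"
    proof -
      have key: "(\<Sum>j\<in>{0..<n}. if E i j then t * w j - norm (v j) else 0) = 0 \<and> R i = \<mu> * w i"
        if iS: "i \<in> S" for i
      proof -
        have i: "i < n" and vi: "norm (v i) = t * w i" using iS by (auto simp: S_def)
        have a: "\<mu> * norm (v i) \<le> norm l * norm (v i)" using lge by (simp add: mult_right_mono)
        have A: "(\<Sum>j\<in>{0..<n}. if E i j then norm (v j) else 0) = t * R i"
          using a chain1[OF i] chain2[of i] chain3[of i] chain4[OF i] vi by (simp add: algebra_simps)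
        have e: "t * (\<mu> * w i) = \<mu> * norm (v i)" using vi by simp
        have B: "t * R i = t * (\<mu> * w i)"
          using a chain1[OF i] chain2[of i] chain3[of i] chain4[OF i] e by linarith
        have "(\<Sum>j\<in>{0..<n}. if E i j then t * w j - norm (v j) else 0)
           = (\<Sum>j\<in>{0..<n}. if E i j then t * w j else 0) - (\<Sum>j\<in>{0..<n}. if E i j then norm (v j) else 0)"
          by (subst sum_subtractf[symmetric]) (rule sum.cong, auto)
        also have "\<dots> = 0" using A chain3[of i] by simp
        finally show ?thesis using B tpos by simp
      qed
      show "\<forall>i\<in>S. \<forall>j<n. E i j \<longrightarrow> j \<in> S"
      proof (intro ballI allI impI)
        fix i j assume iS: "i \<in> S" and j: "j < n" and e: "E i j"
        have nn: "\<And>k. k\<in>{0..<n} \<Longrightarrow> 0 \<le> (if E i k then t * w k - norm (v k) else 0)" using vle by auto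
        have "\<forall>k\<in>{0..<n}. (if E i k then t * w k - norm (v k) else 0) = 0"
          using key[OF iS] sum_nonneg_eq_0_iff[of "{0..<n}" "\<lambda>k. if E i k then t * w k - norm (v k) else 0"] nn by simp
        hence "t * w j - norm (v j) = 0" using j e by force
        thus "j \<in> S" using j by (auto simp: S_def)
      qed
      show "i0 \<notin> S" using key strict unfolding R_def by force
    qed
    have "S \<noteq> {}" using i1 vi1 by (auto simp: S_def)
    moreover have "S \<subseteq> {0..<n}" by (auto simp: S_def)
    ultimately show False using conn closed notin by blast
  qed
qed

lemma eigvec_facts:
  assumes "n > 0" and "l \<in> spectrum (adj_matrix n E)"
  obtains v where "\<exists>i<n. v i \<noteq> 0"
    "\<forall>i<n. l * v i = (\<Sum>j\<in>{0..<n}. if E i j then v j else 0)"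
proof -
  from assms(2) obtain v where ev: "eigenvector (adj_matrix n E) v l"
    unfolding spectrum_def eigenvalue_def by auto
  hence vc: "v \<in> carrier_vec n" and v0: "v \<noteq> 0\<^sub>v n" and eq: "adj_matrix n E *\<^sub>v v = l \<cdot>\<^sub>v v"
    unfolding eigenvector_def by (auto simp: adj_matrix_def)
  have "\<exists>i<n. v $ i \<noteq> 0"
  proof (rule ccontr)
    assume "\<not> ?thesis"
    hence "v = 0\<^sub>v n" using vc by (intro eq_vecI) auto
    thus False using v0 by simp
  qed
  moreover have "\<forall>i<n. l * v $ i = (\<Sum>j\<in>{0..<n}. if E i j then v $ j else 0)"
  proof (intro allI impI)
    fix i assume i: "i < n"
    have "l * v $ i = (adj_matrix n E *\<^sub>v v) $ i" using eq i vc by simp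
    also have "\<dots> = (\<Sum>j\<in>{0..<n}. if E i j then v $ j else 0)" by (rule adj_mult[OF i vc])
    finally show "l * v $ i = (\<Sum>j\<in>{0..<n}. if E i j then v $ j else 0)" .
  qed
  ultimately show ?thesis using that[of "\<lambda>j. v $ j"] by blast
qed

lemma rho_le:
  fixes w :: "nat \<Rightarrow> real"
  assumes n: "n > 0" and wpos: "\<forall>i<n. w i > 0"
  and sub: "\<forall>i<n. (\<Sum>j\<in>{0..<n}. if E i j then w j else 0) \<le> \<mu> * w i"
  shows "graph_rho n E \<le> \<mu>"
proof -
  from spectral_radius_mem_max(1)[OF adj_carrier n]
  obtain l where l: "l \<in> spectrum (adj_matrix n E)" and eq: "graph_rho n E = norm l"
    unfolding graph_rho_def by auto
  obtain v where "\<exists>i<n. v i \<noteq> 0" "\<forall>i<n. l * v i = (\<Sum>j\<in>{0..<n}. if E i j then v j else 0)"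
    using eigvec_facts[OF n l] by blast
  from cw_core(1)[OF this wpos sub] eq show ?thesis by simp
qed

lemma rho_less:
  fixes w :: "nat \<Rightarrow> real"
  assumes n: "n > 0" and wpos: "\<forall>i<n. w i > 0"
  and sub: "\<forall>i<n. (\<Sum>j\<in>{0..<n}. if E i j then w j else 0) \<le> \<mu> * w i"
  and i0: "i0 < n" and strict: "(\<Sum>j\<in>{0..<n}. if E i0 j then w j else 0) < \<mu> * w i0"
  and conn: "\<forall>S. S \<subseteq> {0..<n} \<and> S \<noteq> {} \<and> (\<forall>i\<in>S. \<forall>j<n. E i j \<longrightarrow> j \<in> S) \<longrightarrow> i0 \<in> S"
  shows "graph_rho n E < \<mu>"
proof -
  from spectral_radius_mem_max(1)[OF adj_carrier n]
  obtain l where l: "l \<in> spectrum (adj_matrix n E)" and eq: "graph_rho n E = norm l"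
    unfolding graph_rho_def by auto
  obtain v where "\<exists>i<n. v i \<noteq> 0" "\<forall>i<n. l * v i = (\<Sum>j\<in>{0..<n}. if E i j then v j else 0)"
    using eigvec_facts[OF n l] by blast
  from cw_core(2)[OF this wpos sub i0 strict conn] eq show ?thesis by simp
qed

lemma rho_ge:
  fixes w :: "nat \<Rightarrow> real"
  assumes n: "n > 0" and ex: "\<exists>i<n. w i \<noteq> 0"
  and eig: "\<forall>i<n. (\<Sum>j\<in>{0..<n}. if E i j then w j else 0) = \<mu> * w i"
  shows "\<bar>\<mu>\<bar> \<le> graph_rho n E"
proof -
  define v where "v = vec n (\<lambda>j. complex_of_real (w j))"
  have vc: "v \<in> carrier_vec n" by (simp add: v_def)
  have "adj_matrix n E *\<^sub>v v = complex_of_real \<mu> \<cdot>\<^sub>v v"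
  proof (rule eq_vecI)
    fix i assume "i < dim_vec (complex_of_real \<mu> \<cdot>\<^sub>v v)"
    hence i: "i < n" by (simp add: v_def)
    have "(adj_matrix n E *\<^sub>v v) $ i = (\<Sum>j\<in>{0..<n}. if E i j then v $ j else 0)" by (rule adj_mult[OF i vc])
    also have "\<dots> = complex_of_real (\<Sum>j\<in>{0..<n}. if E i j then w j else 0)"
      by (simp add: v_def of_real_sum) (rule sum.cong, auto simp: v_def)
    also have "\<dots> = complex_of_real \<mu> * v $ i" using eig i by (simp add: v_def)
    finally show "(adj_matrix n E *\<^sub>v v) $ i = (complex_of_real \<mu> \<cdot>\<^sub>v v) $ i" using i vc by simp
  qed (simp add: adj_matrix_def v_def)
  moreover have "v \<noteq> 0\<^sub>v n"
  proof
    assume "v = 0\<^sub>v n"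
    with ex show False by (auto simp: v_def vec_eq_iff)
  qed
  ultimately have "eigenvector (adj_matrix n E) v (complex_of_real \<mu>)"
    unfolding eigenvector_def using vc by (simp add: adj_matrix_def)
  hence "complex_of_real \<mu> \<in> spectrum (adj_matrix n E)"
    unfolding spectrum_def eigenvalue_def by auto
  from spectral_radius_mem_max(2)[OF adj_carrier n imageI[OF this]]
  show ?thesis unfolding graph_rho_def by simp
qed



lemma div3_iff: "(1::nat) \<le> j \<Longrightarrow> ((j - 1) div 3 = k) \<longleftrightarrow> (3*k+1 \<le> j \<and> j \<le> 3*k+3)"
  by auto

lemma tri_card:
  assumes "1 \<le> (i::nat)" "i \<le> 3*r"
  shows "card {j\<in>{1..<3*r+1}. j \<noteq> i \<and> (j-1) div 3 = (i-1) div 3} = 2"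
proof -
  define k where "k = (i-1) div 3"
  have ik: "3*k+1 \<le> i \<and> i \<le> 3*k+3" using div3_iff[of i k] assms by (simp add: k_def)
  have kr: "k < r" using ik assms by linarith
  have "{j\<in>{1..<3*r+1}. j \<noteq> i \<and> (j-1) div 3 = (i-1) div 3} = {3*k+1, 3*k+2, 3*k+3} - {i}"
  proof (intro equalityI subsetI)
    fix j assume "j \<in> {j\<in>{1..<3*r+1}. j \<noteq> i \<and> (j-1) div 3 = (i-1) div 3}"
    hence "1 \<le> j" "j \<noteq> i" "(j-1) div 3 = k" by (auto simp: k_def)
    hence "3*k+1 \<le> j \<and> j \<le> 3*k+3" "j \<noteq> i" using div3_iff by auto
    thus "j \<in> {3*k+1, 3*k+2, 3*k+3} - {i}" by auto
  next
    fix j assume j: "j \<in> {3*k+1, 3*k+2, 3*k+3} - {i}"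
    hence "3*k+1 \<le> j \<and> j \<le> 3*k+3" "j \<noteq> i" "1 \<le> j" by auto
    hence "(j-1) div 3 = k" "j < 3*r+1" using div3_iff kr by auto
    thus "j \<in> {j\<in>{1..<3*r+1}. j \<noteq> i \<and> (j-1) div 3 = (i-1) div 3}" using j by (auto simp: k_def)
  qed
  moreover have "i \<in> {3*k+1, 3*k+2, 3*k+3}" using ik by auto
  ultimately show ?thesis by (auto simp: card_Diff_singleton)
qed

lemma H0: "H_edge n r 0 j \<longleftrightarrow> (1 \<le> j \<and> j \<le> 3*r) \<or> (3*r+3 \<le> j \<and> j < n)"
  unfolding H_edge_def fan_edge_def bip_edge_def by auto
lemma HT: "1 \<le> i \<Longrightarrow> i \<le> 3*r \<Longrightarrow> H_edge n r i j \<longleftrightarrow> j = 0 \<or> (1 \<le> j \<and> j \<le> 3*r \<and> j \<noteq> i \<and> (j-1) div 3 = (i-1) div 3)"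
  unfolding H_edge_def fan_edge_def bip_edge_def by auto
lemma HW: "i = 3*r+1 \<or> i = 3*r+2 \<Longrightarrow> H_edge n r i j \<longleftrightarrow> 3*r+3 \<le> j \<and> j < n"
  unfolding H_edge_def fan_edge_def bip_edge_def by auto
lemma HB: "3*r+3 \<le> i \<Longrightarrow> i < n \<Longrightarrow> H_edge n r i j \<longleftrightarrow> j = 0 \<or> j = 3*r+1 \<or> j = 3*r+2"
  unfolding H_edge_def fan_edge_def bip_edge_def by auto
lemma H'0: "H'_edge n r 0 j \<longleftrightarrow> 1 \<le> j \<and> j \<le> 3*r+3"
  unfolding H'_edge_def fan_edge_def bip_edge_def by auto
lemma H'T: "1 \<le> i \<Longrightarrow> i \<le> 3*r \<Longrightarrow> H'_edge n r i j \<longleftrightarrow> j = 0 \<or> (1 \<le> j \<and> j \<le> 3*r \<and> j \<noteq> i \<and> (j-1) div 3 = (i-1) div 3)"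
  unfolding H'_edge_def fan_edge_def bip_edge_def by auto
lemma H'C: "3*r+1 \<le> i \<Longrightarrow> i \<le> 3*r+3 \<Longrightarrow> H'_edge n r i j \<longleftrightarrow> j = 0 \<or> (3*r+4 \<le> j \<and> j < n)"
  unfolding H'_edge_def fan_edge_def bip_edge_def by auto
lemma H'B: "3*r+4 \<le> i \<Longrightarrow> i < n \<Longrightarrow> H'_edge n r i j \<longleftrightarrow> 3*r+1 \<le> j \<and> j \<le> 3*r+3"
  unfolding H'_edge_def fan_edge_def bip_edge_def by auto



lemma split4: "p \<le> q \<Longrightarrow> q \<le> t \<Longrightarrow> t \<le> (n::nat) \<Longrightarrow> 0 < p \<Longrightarrow>
  sum f {0..<n} = sum f {0..<p} + sum f {p..<q} + sum f {q..<t} + sum f {t..<n}"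
  by (simp add: sum.atLeastLessThan_concat)

lemma piece_const: "(\<And>j. j \<in> A \<Longrightarrow> f j = K) \<Longrightarrow> sum f A = real (card A) * (K::real)"
  by (simp add: sum.cong[of A A f "\<lambda>_. K"])

lemma piece_filter: "(\<And>j. j \<in> A \<Longrightarrow> f j = (if P j then K else 0)) \<Longrightarrow> finite A \<Longrightarrow>
   sum f A = real (card {j\<in>A. P j}) * (K::real)"
  by (simp add: sum.cong[of A A f "\<lambda>j. if P j then K else 0"] sum.inter_filter[symmetric])

definition wH :: "nat \<Rightarrow> real \<Rightarrow> real \<Rightarrow> real \<Rightarrow> real \<Rightarrow> nat \<Rightarrow> real" where
  "wH r a b c d j = (if j = 0 then a else if j \<le> 3*r then b else if j \<le> 3*r+2 then c else d)"
definition wH' :: "nat \<Rightarrow> real \<Rightarrow> real \<Rightarrow> real \<Rightarrow> real \<Rightarrow> nat \<Rightarrow> real" where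
  "wH' r a b c d j = (if j = 0 then a else if j \<le> 3*r then b else if j \<le> 3*r+3 then c else d)"

lemma H_row0: assumes "3*r+6 \<le> n"
  shows "(\<Sum>j\<in>{0..<n}. if H_edge n r 0 j then wH r a b c d j else 0) = 3*r*b + real (n-3*r-3)*d"
proof -
  let ?f = "\<lambda>j. if H_edge n r 0 j then wH r a b c d j else 0"
  have "sum ?f {0..<n} = sum ?f {0..<1} + sum ?f {1..<3*r+1} + sum ?f {3*r+1..<3*r+3} + sum ?f {3*r+3..<n}"
    using assms by (intro split4) auto
  moreover have "sum ?f {0..<1} = 0" by (simp add: H0)
  moreover have "sum ?f {1..<3*r+1} = real (card {1..<3*r+1}) * b" by (rule piece_const) (auto simp: H0 wH_def)
  moreover have "sum ?f {3*r+1..<3*r+3} = real (card {3*r+1..<3*r+3}) * 0" by (rule piece_const) (auto simp: H0 wH_def)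
  moreover have "sum ?f {3*r+3..<n} = real (card {3*r+3..<n}) * d" by (rule piece_const) (auto simp: H0 wH_def)
  ultimately show ?thesis by simp
qed

lemma H_rowT: assumes "3*r+6 \<le> n" "1 \<le> i" "i \<le> 3*r"
  shows "(\<Sum>j\<in>{0..<n}. if H_edge n r i j then wH r a b c d j else 0) = a + 2*b"
proof -
  let ?f = "\<lambda>j. if H_edge n r i j then wH r a b c d j else 0"
  have "sum ?f {0..<n} = sum ?f {0..<1} + sum ?f {1..<3*r+1} + sum ?f {3*r+1..<3*r+3} + sum ?f {3*r+3..<n}"
    using assms by (intro split4) auto
  moreover have "sum ?f {0..<1} = a" using assms by (simp add: HT wH_def)
  moreover have "sum ?f {1..<3*r+1} = real (card {j\<in>{1..<3*r+1}. j \<noteq> i \<and> (j-1) div 3 = (i-1) div 3}) * b"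
    by (rule piece_filter) (use assms in \<open>auto simp: HT wH_def\<close>)
  moreover have "sum ?f {3*r+1..<3*r+3} = real (card {3*r+1..<3*r+3}) * 0" by (rule piece_const) (use assms in \<open>auto simp: HT wH_def\<close>)
  moreover have "sum ?f {3*r+3..<n} = real (card {3*r+3..<n}) * 0" by (rule piece_const) (use assms in \<open>auto simp: HT wH_def\<close>)
  ultimately show ?thesis using tri_card[OF assms(2,3)] by simp
qed

lemma H_rowW: assumes "3*r+6 \<le> n" "i = 3*r+1 \<or> i = 3*r+2"
  shows "(\<Sum>j\<in>{0..<n}. if H_edge n r i j then wH r a b c d j else 0) = real (n-3*r-3)*d"
proof -
  let ?f = "\<lambda>j. if H_edge n r i j then wH r a b c d j else 0"
  have "sum ?f {0..<n} = sum ?f {0..<1} + sum ?f {1..<3*r+1} + sum ?f {3*r+1..<3*r+3} + sum ?f {3*r+3..<n}"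
    using assms by (intro split4) auto
  moreover have "sum ?f {0..<1} = 0" using assms by (simp add: HW)
  moreover have "sum ?f {1..<3*r+1} = real (card {1..<3*r+1}) * 0" by (rule piece_const) (use assms in \<open>auto simp: HW wH_def\<close>)
  moreover have "sum ?f {3*r+1..<3*r+3} = real (card {3*r+1..<3*r+3}) * 0" by (rule piece_const) (use assms in \<open>auto simp: HW wH_def\<close>)
  moreover have "sum ?f {3*r+3..<n} = real (card {3*r+3..<n}) * d" by (rule piece_const) (use assms in \<open>auto simp: HW wH_def\<close>)
  ultimately show ?thesis by simp
qed

lemma H_rowB: assumes "3*r+6 \<le> n" "3*r+3 \<le> i" "i < n"
  shows "(\<Sum>j\<in>{0..<n}. if H_edge n r i j then wH r a b c d j else 0) = a + 2*c"
proof -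
  let ?f = "\<lambda>j. if H_edge n r i j then wH r a b c d j else 0"
  have "sum ?f {0..<n} = sum ?f {0..<1} + sum ?f {1..<3*r+1} + sum ?f {3*r+1..<3*r+3} + sum ?f {3*r+3..<n}"
    using assms by (intro split4) auto
  moreover have "sum ?f {0..<1} = a" using assms by (simp add: HB wH_def)
  moreover have "sum ?f {1..<3*r+1} = real (card {1..<3*r+1}) * 0" by (rule piece_const) (use assms in \<open>auto simp: HB wH_def\<close>)
  moreover have "sum ?f {3*r+1..<3*r+3} = real (card {3*r+1..<3*r+3}) * c" by (rule piece_const) (use assms in \<open>auto simp: HB wH_def\<close>)
  moreover have "sum ?f {3*r+3..<n} = real (card {3*r+3..<n}) * 0" by (rule piece_const) (use assms in \<open>auto simp: HB wH_def\<close>)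
  ultimately show ?thesis by simp
qed

lemma H'_row0: assumes "3*r+6 \<le> n"
  shows "(\<Sum>j\<in>{0..<n}. if H'_edge n r 0 j then wH' r a b c d j else 0) = 3*r*b + 3*c"
proof -
  let ?f = "\<lambda>j. if H'_edge n r 0 j then wH' r a b c d j else 0"
  have "sum ?f {0..<n} = sum ?f {0..<1} + sum ?f {1..<3*r+1} + sum ?f {3*r+1..<3*r+4} + sum ?f {3*r+4..<n}"
    using assms by (intro split4) auto
  moreover have "sum ?f {0..<1} = 0" by (simp add: H'0)
  moreover have "sum ?f {1..<3*r+1} = real (card {1..<3*r+1}) * b" by (rule piece_const) (auto simp: H'0 wH'_def)
  moreover have "sum ?f {3*r+1..<3*r+4} = real (card {3*r+1..<3*r+4}) * c" by (rule piece_const) (auto simp: H'0 wH'_def)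
  moreover have "sum ?f {3*r+4..<n} = real (card {3*r+4..<n}) * 0" by (rule piece_const) (auto simp: H'0 wH'_def)
  ultimately show ?thesis by simp
qed

lemma H'_rowT: assumes "3*r+6 \<le> n" "1 \<le> i" "i \<le> 3*r"
  shows "(\<Sum>j\<in>{0..<n}. if H'_edge n r i j then wH' r a b c d j else 0) = a + 2*b"
proof -
  let ?f = "\<lambda>j. if H'_edge n r i j then wH' r a b c d j else 0"
  have "sum ?f {0..<n} = sum ?f {0..<1} + sum ?f {1..<3*r+1} + sum ?f {3*r+1..<3*r+4} + sum ?f {3*r+4..<n}"
    using assms by (intro split4) auto
  moreover have "sum ?f {0..<1} = a" using assms by (simp add: H'T wH'_def)
  moreover have "sum ?f {1..<3*r+1} = real (card {j\<in>{1..<3*r+1}. j \<noteq> i \<and> (j-1) div 3 = (i-1) div 3}) * b"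
    by (rule piece_filter) (use assms in \<open>auto simp: H'T wH'_def\<close>)
  moreover have "sum ?f {3*r+1..<3*r+4} = real (card {3*r+1..<3*r+4}) * 0" by (rule piece_const) (use assms in \<open>auto simp: H'T wH'_def\<close>)
  moreover have "sum ?f {3*r+4..<n} = real (card {3*r+4..<n}) * 0" by (rule piece_const) (use assms in \<open>auto simp: H'T wH'_def\<close>)
  ultimately show ?thesis using tri_card[OF assms(2,3)] by simp
qed

lemma H'_rowC: assumes "3*r+6 \<le> n" "3*r+1 \<le> i" "i \<le> 3*r+3"
  shows "(\<Sum>j\<in>{0..<n}. if H'_edge n r i j then wH' r a b c d j else 0) = a + real (n-3*r-4)*d"
proof -
  let ?f = "\<lambda>j. if H'_edge n r i j then wH' r a b c d j else 0"
  have "sum ?f {0..<n} = sum ?f {0..<1} + sum ?f {1..<3*r+1} + sum ?f {3*r+1..<3*r+4} + sum ?f {3*r+4..<n}"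
    using assms by (intro split4) auto
  moreover have "sum ?f {0..<1} = a" using assms by (simp add: H'C wH'_def)
  moreover have "sum ?f {1..<3*r+1} = real (card {1..<3*r+1}) * 0" by (rule piece_const) (use assms in \<open>auto simp: H'C wH'_def\<close>)
  moreover have "sum ?f {3*r+1..<3*r+4} = real (card {3*r+1..<3*r+4}) * 0" by (rule piece_const) (use assms in \<open>auto simp: H'C wH'_def\<close>)
  moreover have "sum ?f {3*r+4..<n} = real (card {3*r+4..<n}) * d" by (rule piece_const) (use assms in \<open>auto simp: H'C wH'_def\<close>)
  ultimately show ?thesis by simp
qed

lemma H'_rowB: assumes "3*r+6 \<le> n" "3*r+4 \<le> i" "i < n"
  shows "(\<Sum>j\<in>{0..<n}. if H'_edge n r i j then wH' r a b c d j else 0) = 3*c"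
proof -
  let ?f = "\<lambda>j. if H'_edge n r i j then wH' r a b c d j else 0"
  have "sum ?f {0..<n} = sum ?f {0..<1} + sum ?f {1..<3*r+1} + sum ?f {3*r+1..<3*r+4} + sum ?f {3*r+4..<n}"
    using assms by (intro split4) auto
  moreover have "sum ?f {0..<1} = 0" using assms by (simp add: H'B)
  moreover have "sum ?f {1..<3*r+1} = real (card {1..<3*r+1}) * 0" by (rule piece_const) (use assms in \<open>auto simp: H'B wH'_def\<close>)
  moreover have "sum ?f {3*r+1..<3*r+4} = real (card {3*r+1..<3*r+4}) * c" by (rule piece_const) (use assms in \<open>auto simp: H'B wH'_def\<close>)
  moreover have "sum ?f {3*r+4..<n} = real (card {3*r+4..<n}) * 0" by (rule piece_const) (use assms in \<open>auto simp: H'B wH'_def\<close>)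
  ultimately show ?thesis by simp
qed



lemma wH_pos: "0<a \<Longrightarrow> 0<b \<Longrightarrow> 0<c \<Longrightarrow> 0<d \<Longrightarrow> 0 < wH r a b c d j" by (simp add: wH_def)
lemma wH'_pos: "0<a \<Longrightarrow> 0<b \<Longrightarrow> 0<c \<Longrightarrow> 0<d \<Longrightarrow> 0 < wH' r a b c d j" by (simp add: wH'_def)

lemma H'_conn: assumes "3*r+6 \<le> n"
  shows "\<forall>S. S \<subseteq> {0..<n} \<and> S \<noteq> {} \<and> (\<forall>i\<in>S. \<forall>j<n. H'_edge n r i j \<longrightarrow> j \<in> S) \<longrightarrow> 0 \<in> S"
proof (intro allI impI)
  fix S assume A: "S \<subseteq> {0..<n} \<and> S \<noteq> {} \<and> (\<forall>i\<in>S. \<forall>j<n. H'_edge n r i j \<longrightarrow> j \<in> S)"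
  then obtain i where iS: "i \<in> S" by auto
  have n0: "0 < n" using assms by simp
  have i: "i < n" using A iS by auto
  have cl: "\<And>i j. i \<in> S \<Longrightarrow> j < n \<Longrightarrow> H'_edge n r i j \<Longrightarrow> j \<in> S" using A by blast
  have C0: "\<And>k. k \<in> S \<Longrightarrow> 3*r+1 \<le> k \<Longrightarrow> k \<le> 3*r+3 \<Longrightarrow> 0 \<in> S"
    using cl n0 H'C by blast
  show "0 \<in> S"
  proof (cases "i = 0")
    case True thus ?thesis using iS by simp
  next
    case False
    show ?thesis
    proof (cases "i \<le> 3*r")
      case True thus ?thesis using cl[OF iS n0] H'T[of i r n 0] False by simp
    next
      case F2: False
      show ?thesis
      proof (cases "i \<le> 3*r+3")
        case True thus ?thesis using C0[OF iS] F2 by simp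
      next
        case False
        have "3*r+1 \<in> S" using cl[OF iS, of "3*r+1"] H'B[of r i n "3*r+1"] False i assms by simp
        thus ?thesis using C0 by simp
      qed
    qed
  qed
qed

theorem lemma4p2:
  fixes n r :: nat
  assumes "r \<ge> 1" and "n \<ge> 3*r + 6"
  shows "graph_rho n (H_edge n r) \<ge> graph_rho n (H'_edge n r) \<and>
         (graph_rho n (H_edge n r) = graph_rho n (H'_edge n r) \<longleftrightarrow> n = 3*r + 6)"
proof -
  define M where "M = real (n - 3*r - 3)"
  have M3: "M \<ge> 3" using assms by (simp add: M_def)
  have M4: "real (n - 3*r - 4) = M - 1" using assms by (simp add: M_def of_nat_diff)
  have Meq: "M = 3 \<longleftrightarrow> n = 3*r+6" using assms by (auto simp: M_def)
  have r1: "real r \<ge> 1" using assms by simp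
  define F where "F x = x*(x-2)*(x^2-2*M) - 3*real r*(x^2-2*M) - M*x*(x-2)" for x
  define x0 where "x0 = sqrt (3*M)"
  have M0: "0 \<le> 3*M" using M3 by linarith
  have x0sq: "x0^2 = 3*M" unfolding x0_def by (rule real_sqrt_pow2[OF M0])
  have x0nn: "x0 \<ge> 0" unfolding x0_def by (rule real_sqrt_ge_zero[OF M0])
  have Fx0: "F x0 < 0"
  proof -
    have "F x0 = - 3*real r*M" unfolding F_def using x0sq by (simp add: algebra_simps)
    thus ?thesis using M3 r1 by simp
  qed
  define X where "X = 6*real r + 4*M + 3"
  have FX: "F X > 0"
  proof -
    define y where "y = X*(X-2)"
    have X3: "X \<ge> 3" using M3 by (simp add: X_def)
    have yX: "y \<ge> X" unfolding y_def using X3 mult_left_mono[of 1 "X-2" X] by simp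
    have XX: "X^2 \<ge> X" using X3 by (simp add: power2_eq_square)
    have a1: "2*M < X^2 - 2*M" using XX M3 by (simp add: X_def)
    have a2: "y/2 < y - 3*real r" using yX M3 by (simp add: X_def)
    have "2*M*(y/2) < (X^2-2*M)*(y - 3*real r)"
      using mult_strict_mono[OF a1 a2] a1 M3 yX X3 by simp
    hence "0 < (X^2-2*M)*(y - 3*real r) - M*y" by simp
    thus ?thesis unfolding F_def y_def by (simp add: algebra_simps)
  qed
  have x0X: "x0 \<le> X"
  proof -
    have X3: "X \<ge> 3" using M3 by (simp add: X_def)
    have XX: "X^2 \<ge> X" using X3 by (simp add: power2_eq_square)
    have "3*M \<le> X^2" using XX M3 by (simp add: X_def)
    hence "sqrt (3*M) \<le> sqrt (X^2)" by (rule real_sqrt_le_mono)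
    thus ?thesis using X3 by (simp add: x0_def)
  qed
  have cont: "\<forall>x. x0 \<le> x \<and> x \<le> X \<longrightarrow> isCont F x" unfolding F_def by (auto intro!: continuous_intros)
  obtain \<mu> where mu: "x0 \<le> \<mu>" "\<mu> \<le> X" "F \<mu> = 0"
    using IVT[of F x0 0 X, OF _ _ x0X cont] Fx0 FX by force
  have mux0: "x0 < \<mu>" using mu Fx0 by (cases "x0 = \<mu>") auto
  have musq: "\<mu>^2 > 3*M" using power_strict_mono[OF mux0 x0nn, of 2] x0sq by simp
  have mu3: "\<mu> > 3"
  proof (rule ccontr)
    assume "\<not> \<mu> > 3"
    hence "\<mu> \<le> 3" by simp
    hence "\<mu>^2 \<le> 3^2" using mux0 x0nn by (intro power_mono) auto
    thus False using musq M3 by simp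
  qed
  define D1 where "D1 = \<mu> - 2"
  define D2 where "D2 = \<mu>^2 - 2*M"
  define D3 where "D3 = \<mu>^2 - 3*M + 3"
  have D1p: "D1 > 0" and D2p: "D2 > 0" and D3p: "D3 > 0" using mu3 musq M3 by (auto simp: D1_def D2_def D3_def)
  have Fmu: "\<mu>*D1*D2 = 3*real r*D2 + M*\<mu>*D1" using mu(3) unfolding F_def D1_def D2_def by (simp add: algebra_simps)
  define x where "x = wH r 1 (1/D1) (M/D2) (\<mu>/D2)"
  define w where "w = wH' r 1 (1/D1) (\<mu>/D3) (3/D3)"
  have n0: "n > 0" using assms by simp
  have xpos: "\<forall>i<n. x i > 0" unfolding x_def using D1p D2p M3 mu3 by (auto intro!: wH_pos)
  have wpos: "\<forall>i<n. w i > 0" unfolding w_def using D1p D3p M3 mu3 by (auto intro!: wH'_pos)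
  have row0: "3*real r*(1/D1) + M*(\<mu>/D2) = \<mu>"
  proof -
    have "3*real r*(1/D1) + M*(\<mu>/D2) = (3*real r*D2 + M*\<mu>*D1) / (D1*D2)" using D1p D2p by (simp add: field_simps)
    also have "\<dots> = (\<mu>*D1*D2) / (D1*D2)" using Fmu by simp
    also have "\<dots> = \<mu>" using D1p D2p by simp
    finally show ?thesis .
  qed
  have rowT: "1 + 2*(1/D1) = \<mu> * (1/D1)" using D1p by (simp add: field_simps D1_def)
  have xeig: "\<forall>i<n. (\<Sum>j\<in>{0..<n}. if H_edge n r i j then x j else 0) = \<mu> * x i"
  proof (intro allI impI)
    fix i assume i: "i < n"
    consider "i = 0" | "1 \<le> i \<and> i \<le> 3*r" | "i = 3*r+1 \<or> i = 3*r+2" | "3*r+3 \<le> i" by linarith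
    thus "(\<Sum>j\<in>{0..<n}. if H_edge n r i j then x j else 0) = \<mu> * x i"
    proof cases
      case 1
      have "(\<Sum>j\<in>{0..<n}. if H_edge n r 0 j then x j else 0) = 3*real r*(1/D1) + M*(\<mu>/D2)"
        unfolding x_def M_def by (rule H_row0[OF assms(2)])
      thus ?thesis using 1 row0 by (simp add: x_def wH_def)
    next
      case 2
      have "(\<Sum>j\<in>{0..<n}. if H_edge n r i j then x j else 0) = 1 + 2*(1/D1)"
        unfolding x_def using H_rowT[OF assms(2)] 2 by blast
      thus ?thesis using 2 rowT by (simp add: x_def wH_def)
    next
      case 3
      have "(\<Sum>j\<in>{0..<n}. if H_edge n r i j then x j else 0) = M*(\<mu>/D2)"
        unfolding x_def M_def using H_rowW[OF assms(2) 3] by blast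
      thus ?thesis using 3 by (auto simp: x_def wH_def)
    next
      case 4
      have e: "1 + 2*(M/D2) = \<mu>*(\<mu>/D2)" using D2p by (simp add: field_simps D2_def power2_eq_square)
      have "(\<Sum>j\<in>{0..<n}. if H_edge n r i j then x j else 0) = 1 + 2*(M/D2)"
        unfolding x_def using H_rowB[OF assms(2) 4 i] by blast
      thus ?thesis using 4 e by (simp add: x_def wH_def)
    qed
  qed
  have key: "3 * D2 \<le> M * D3" and keys: "M > 3 \<Longrightarrow> 3 * D2 < M * D3"
  proof -
    have e: "M * D3 - 3 * D2 = (M - 3) * (\<mu>^2 - 3*M)" by (simp add: D2_def D3_def algebra_simps power2_eq_square)
    have p: "(M - 3) * (\<mu>^2 - 3*M) \<ge> 0" using M3 musq by (intro mult_nonneg_nonneg) auto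
    show "3 * D2 \<le> M * D3" using e p by linarith
    show "M > 3 \<Longrightarrow> 3 * D2 < M * D3"
    proof -
      assume "M > 3"
      hence "(M - 3) * (\<mu>^2 - 3*M) > 0" using musq by (intro mult_pos_pos) auto
      thus ?thesis using e by linarith
    qed
  qed
  have w0: "3*real r*(1/D1) + 3*(\<mu>/D3) = \<mu> - (M*(\<mu>/D2) - 3*(\<mu>/D3))" using row0 by simp
  have cmp: "3*(\<mu>/D3) \<le> M*(\<mu>/D2)" and cmps: "M > 3 \<Longrightarrow> 3*(\<mu>/D3) < M*(\<mu>/D2)"
  proof -
    have "3*(\<mu>/D3) = \<mu> * 3 / D3" by simp
    have iff: "3*(\<mu>/D3) \<le> M*(\<mu>/D2) \<longleftrightarrow> 3 * D2 \<le> M * D3" and iffs: "3*(\<mu>/D3) < M*(\<mu>/D2) \<longleftrightarrow> 3 * D2 < M * D3"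
      using D2p D3p mu3 by (simp_all add: field_simps)
    show "3*(\<mu>/D3) \<le> M*(\<mu>/D2)" using iff key by simp
    show "M > 3 \<Longrightarrow> 3*(\<mu>/D3) < M*(\<mu>/D2)" using iffs keys by simp
  qed
  have wrowC: "1 + (M - 1)*(3/D3) = \<mu>*(\<mu>/D3)" using D3p by (simp add: field_simps D3_def power2_eq_square)
  have wrow: "(\<Sum>j\<in>{0..<n}. if H'_edge n r i j then w j else 0) = \<mu> * w i" if i: "i < n" "i \<noteq> 0" for i
  proof -
    consider "1 \<le> i \<and> i \<le> 3*r" | "3*r+1 \<le> i \<and> i \<le> 3*r+3" | "3*r+4 \<le> i" using i by linarith
    thus ?thesis
    proof cases
      case 1
      have "(\<Sum>j\<in>{0..<n}. if H'_edge n r i j then w j else 0) = 1 + 2*(1/D1)"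
        unfolding w_def using H'_rowT[OF assms(2)] 1 by blast
      thus ?thesis using 1 rowT by (simp add: w_def wH'_def)
    next
      case 2
      have "(\<Sum>j\<in>{0..<n}. if H'_edge n r i j then w j else 0) = 1 + real (n-3*r-4)*(3/D3)"
        unfolding w_def using H'_rowC[OF assms(2)] 2 by blast
      thus ?thesis using 2 wrowC M4 by (simp add: w_def wH'_def)
    next
      case 3
      have "(\<Sum>j\<in>{0..<n}. if H'_edge n r i j then w j else 0) = 3*(\<mu>/D3)"
        unfolding w_def using H'_rowB[OF assms(2) 3 i(1)] by blast
      thus ?thesis using 3 by (simp add: w_def wH'_def)
    qed
  qed
  have wrow0: "(\<Sum>j\<in>{0..<n}. if H'_edge n r 0 j then w j else 0) = 3*real r*(1/D1) + 3*(\<mu>/D3)"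
    unfolding w_def by (rule H'_row0[OF assms(2)])
  have wsub: "\<forall>i<n. (\<Sum>j\<in>{0..<n}. if H'_edge n r i j then w j else 0) \<le> \<mu> * w i"
  proof (intro allI impI)
    fix i assume i: "i < n"
    show "(\<Sum>j\<in>{0..<n}. if H'_edge n r i j then w j else 0) \<le> \<mu> * w i"
    proof (cases "i = 0")
      case True thus ?thesis using wrow0 w0 cmp by (simp add: w_def wH'_def)
    qed (use wrow i in simp)
  qed
  have rhoH: "\<mu> \<le> graph_rho n (H_edge n r)"
    using rho_ge[OF n0 _ xeig] xpos n0 mu3 by force
  have rhoH': "graph_rho n (H'_edge n r) \<le> \<mu>" by (rule rho_le[OF n0 wpos wsub])
  show ?thesis
  proof (cases "M = 3")
    case True
    have weig: "\<forall>i<n. (\<Sum>j\<in>{0..<n}. if H'_edge n r i j then w j else 0) = \<mu> * w i"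
    proof (intro allI impI)
      fix i assume i: "i < n"
      show "(\<Sum>j\<in>{0..<n}. if H'_edge n r i j then w j else 0) = \<mu> * w i"
      proof (cases "i = 0")
        case True
        have "3*(\<mu>/D3) = M*(\<mu>/D2)" using `M = 3` by (simp add: D2_def D3_def)
        thus ?thesis using True wrow0 w0 by (simp add: w_def wH'_def)
      qed (use wrow i in simp)
    qed
    have "\<mu> \<le> graph_rho n (H'_edge n r)" using rho_ge[OF n0 _ weig] wpos n0 mu3 by force
    moreover have "graph_rho n (H_edge n r) \<le> \<mu>" using rho_le[OF n0 xpos] xeig by simp
    ultimately show ?thesis using rhoH rhoH' True Meq by simp
  next
    case False
    hence M3s: "M > 3" using M3 by simp
    have strict: "(\<Sum>j\<in>{0..<n}. if H'_edge n r 0 j then w j else 0) < \<mu> * w 0"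
      using wrow0 w0 cmps[OF M3s] by (simp add: w_def wH'_def)
    have "graph_rho n (H'_edge n r) < \<mu>"
      by (rule rho_less[OF n0 wpos wsub n0 strict H'_conn[OF assms(2)]])
    thus ?thesis using rhoH False Meq by simp
  qed
qed

end
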